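(* Let $G$ be a graph with $n$ nodes, degree matrix $\mathbf{D}$ and normalized graph Laplacian $\tilde{\mathbf{L}}$, and let $\tilde{\mathbf{L}}=\mathbf{U}\mathbf{\Sigma}\mathbf{U}^T$ be an eigendecomposition of $\tilde{\mathbf{L}}$. Then for any $n\times n$ permutation matrix $\mathbf{M}$, the matrix $\mathbf{D}^{1/2}\mathbf{U}\mathbf{\Sigma}^{1/2}\mathbf{M}$ is adjacency-identifying.
   Context: Graphs are finite, undirected, without self-loops and without isolated nodes; $\mathbf{A}(G)$ is the adjacency matrix, $\mathbf{L}=\mathbf{D}-\mathbf{A}(G)$ and $\tilde{\mathbf{L}}=\mathbf{I}-\mathbf{D}^{-1/2}\mathbf{A}(G)\mathbf{D}^{-1/2}$. In the eigendecomposition, $\mathbf{U}$ is orthogonal and $\mathbf{\Sigma}$ diagonal with the nonnegative eigenvalues. $d_k>0$ is a fixed constant. A matrix $\mathbf{P}\in\mathbb{R}^{n\times e}$ is adjacency-identifying if there exist $\mathbf{W}^Q,\mathbf{W}^K\in\mathbb{R}^{e\times e}$ such that $\tilde{\mathbf{P}}=\frac{1}{\sqrt{d_k}}\mathbf{P}\mathbf{W}^Q(\mathbf{P}\mathbf{W}^K)^T$ satisfies $\tilde{\mathbf{P}}_{ij}=\max_k\tilde{\mathbf{P}}_{ik}\iff\mathbf{A}(G)_{ij}=1$ for all $i,j$. *)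

theory Defs
  imports "HOL-Analysis.Analysis"
begin

definition simple_graph :: "('n::finite \<Rightarrow> 'n \<Rightarrow> bool) \<Rightarrow> bool" where
  "simple_graph E \<longleftrightarrow> (\<forall>i j. E i j \<longleftrightarrow> E j i) \<and> (\<forall>i. \<not> E i i) \<and> (\<forall>i. \<exists>j. E i j)"

definition adj_matrix :: "('n::finite \<Rightarrow> 'n \<Rightarrow> bool) \<Rightarrow> real^'n^'n" where
  "adj_matrix E = (\<chi> i j. if E i j then 1 else 0)"

definition degree :: "('n::finite \<Rightarrow> 'n \<Rightarrow> bool) \<Rightarrow> 'n \<Rightarrow> real" where
  "degree E i = real (card {j. E i j})"

definition diag_mat :: "('n::finite \<Rightarrow> real) \<Rightarrow> real^'n^'n" where
  "diag_mat f = (\<chi> i j. if i = j then f i else 0)"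

definition degree_matrix :: "('n::finite \<Rightarrow> 'n \<Rightarrow> bool) \<Rightarrow> real^'n^'n" where
  "degree_matrix E = diag_mat (degree E)"

definition degree_sqrt :: "('n::finite \<Rightarrow> 'n \<Rightarrow> bool) \<Rightarrow> real^'n^'n" where
  "degree_sqrt E = diag_mat (\<lambda>i. sqrt (degree E i))"

definition degree_inv_sqrt :: "('n::finite \<Rightarrow> 'n \<Rightarrow> bool) \<Rightarrow> real^'n^'n" where
  "degree_inv_sqrt E = diag_mat (\<lambda>i. 1 / sqrt (degree E i))"

definition norm_laplacian :: "('n::finite \<Rightarrow> 'n \<Rightarrow> bool) \<Rightarrow> real^'n^'n" where
  "norm_laplacian E = mat 1 - degree_inv_sqrt E ** adj_matrix E ** degree_inv_sqrt E"

definition is_diagonal :: "real^'n^'n \<Rightarrow> bool" where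
  "is_diagonal S \<longleftrightarrow> (\<forall>i j. i \<noteq> j \<longrightarrow> S $ i $ j = 0)"

definition diag_sqrt :: "real^'n^'n \<Rightarrow> real^'n^'n" where
  "diag_sqrt S = diag_mat (\<lambda>i. sqrt (S $ i $ i))"

definition permutation_matrix :: "real^'n^'n \<Rightarrow> bool" where
  "permutation_matrix M \<longleftrightarrow> (\<exists>p. p permutes (UNIV::'n set) \<and> M = (\<chi> i j. if p i = j then 1 else 0))"

text \<open>Adjacency-identifying (with attention scaling constant dk).\<close>
definition adjacency_identifying ::
  "real \<Rightarrow> ('n::finite \<Rightarrow> 'n \<Rightarrow> bool) \<Rightarrow> real^'e::finite^'n \<Rightarrow> bool" where
  "adjacency_identifying dk E P \<longleftrightarrow>
     (\<exists>WQ WK :: real^'e^'e.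
        let Pt = (1 / sqrt dk) *\<^sub>R ((P ** WQ) ** transpose (P ** WK)) in
        (\<forall>i j. Pt $ i $ j = Max (range (\<lambda>k. Pt $ i $ k)) \<longleftrightarrow> adj_matrix E $ i $ j = 1))"

end

theory Submission
  imports Defs
begin

lemma ifz_mult: "(if P then a else 0) * (b::real) = (if P then a * b else 0)" by simp
lemma mult_ifz: "(b::real) * (if P then a else 0) = (if P then b * a else 0)" by simp

lemma diag_mul_left: "(diag_mat f ** X) $ i $ j = f i * X $ i $ j"
proof -
  have "(diag_mat f ** X) $ i $ j = (\<Sum>k\<in>UNIV. (if i = k then f i else 0) * X $ k $ j)"
    by (simp add: matrix_matrix_mult_def diag_mat_def)
  also have "\<dots> = f i * X $ i $ j"
    by (simp add: ifz_mult mult_ifz sum.delta cong: if_cong)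
  finally show ?thesis .
qed

lemma diag_mul_right: "(X ** diag_mat f) $ i $ j = X $ i $ j * f j"
proof -
  have "(X ** diag_mat f) $ i $ j = (\<Sum>k\<in>UNIV. X $ i $ k * (if k = j then f k else 0))"
    by (simp add: matrix_matrix_mult_def diag_mat_def)
  also have "\<dots> = X $ i $ j * f j"
    by (simp add: ifz_mult mult_ifz sum.delta' cong: if_cong)
  finally show ?thesis .
qed

lemma transpose_diag: "transpose (diag_mat f) = diag_mat f"
  by (simp add: transpose_def diag_mat_def vec_eq_iff)

lemma perm_orth:
  assumes "permutation_matrix (M::real^'n::finite^'n)"
  shows "M ** transpose M = mat 1"
proof -
  obtain p where p: "p permutes (UNIV::'n set)" and M: "M = (\<chi> i j. if p i = j then 1 else 0)"
    using assms unfolding permutation_matrix_def by blast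
  have inj: "p i = p j \<longleftrightarrow> i = j" for i j using p by (metis permutes_inj injD)
  show ?thesis
  proof (simp add: vec_eq_iff, intro allI)
    fix i j
    have "(M ** transpose M) $ i $ j = (\<Sum>k\<in>UNIV. (if p i = k then 1 else 0) * (if p j = k then 1 else (0::real)))"
      by (simp add: matrix_matrix_mult_def M transpose_def)
    also have "\<dots> = (if p j = p i then 1 else 0)"
      by (simp add: ifz_mult mult_ifz sum.delta cong: if_cong)
    also have "\<dots> = mat 1 $ i $ j" using inj[of j i] by (simp add: mat_def)
    finally show "(M ** transpose M) $ i $ j = mat 1 $ i $ j" .
  qed
qed

lemma sqrt_sq_diag:
  assumes "is_diagonal S" "\<forall>i. S $ i $ i \<ge> 0"
  shows "diag_sqrt S ** diag_sqrt S = S"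
proof -
  have "(diag_sqrt S ** diag_sqrt S) $ i $ j = S $ i $ j" for i j
  proof -
    have "(diag_sqrt S ** diag_sqrt S) $ i $ j = sqrt (S $ i $ i) * diag_sqrt S $ i $ j"
      unfolding diag_sqrt_def by (rule diag_mul_left)
    then show ?thesis using assms unfolding is_diagonal_def
      by (simp add: diag_sqrt_def diag_mat_def)
  qed
  then show ?thesis by (simp add: vec_eq_iff)
qed

theorem lemmaF10:
  fixes E :: "'n::finite \<Rightarrow> 'n \<Rightarrow> bool"
    and U \<Sigma> M :: "real^'n^'n"
    and dk :: real
  assumes "dk > 0"
    and "simple_graph E"
    and "orthogonal_matrix U"
    and "is_diagonal \<Sigma>"
    and "\<forall>i. \<Sigma> $ i $ i \<ge> 0"
    and "norm_laplacian E = U ** \<Sigma> ** transpose U"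
    and "permutation_matrix M"
  shows "adjacency_identifying dk E (degree_sqrt E ** U ** diag_sqrt \<Sigma> ** M)"
proof -
  define P where "P = degree_sqrt E ** U ** diag_sqrt \<Sigma> ** M"
  define Dh where "Dh = degree_sqrt E"
  define R where "R = diag_sqrt \<Sigma>"
  define c where "c = 1 / sqrt dk"
  have c: "c > 0" using assms(1) by (simp add: c_def)
  have sg: "\<And>i j. E i j \<longleftrightarrow> E j i" "\<And>i. \<not> E i i" "\<And>i. \<exists>j. E i j"
    using assms(2) unfolding simple_graph_def by auto
  have dpos: "degree E i > 0" for i
  proof -
    obtain j where "E i j" using sg(3) by blast
    then have "{j. E i j} \<noteq> {}" by blast
    then show ?thesis unfolding degree_def by (simp add: card_gt_0_iff)
  qed
  have RT: "transpose R = R" unfolding R_def diag_sqrt_def by (rule transpose_diag)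
  have DT: "transpose Dh = Dh" unfolding Dh_def degree_sqrt_def by (rule transpose_diag)
  have "P ** transpose P = Dh ** U ** R ** (M ** transpose M) ** R ** transpose U ** Dh"
    unfolding P_def Dh_def[symmetric] R_def[symmetric]
    by (simp add: matrix_transpose_mul RT DT matrix_mul_assoc)
  also have "\<dots> = Dh ** (U ** \<Sigma> ** transpose U) ** Dh"
  proof -
    have "Dh ** U ** R ** (M ** transpose M) ** R ** transpose U ** Dh
       = Dh ** U ** (R ** R) ** transpose U ** Dh"
      using perm_orth[OF assms(7)] by (simp add: matrix_mul_assoc matrix_mul_rid)
    then show ?thesis using sqrt_sq_diag[OF assms(4,5)] by (simp add: R_def matrix_mul_assoc)
  qed
  also have "\<dots> = Dh ** norm_laplacian E ** Dh" using assms(6) by simp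
  finally have PP: "P ** transpose P = Dh ** norm_laplacian E ** Dh" .
  define Pt where "Pt = (1 / sqrt dk) *\<^sub>R ((P ** (- mat 1)) ** transpose (P ** mat 1))"
  have Pt_eq: "Pt $ i $ j = (if E i j then c else if i = j then - c * degree E i else 0)" for i j
  proof -
    have "(P ** (- mat 1)) ** transpose (P ** mat 1) = - (P ** transpose P)"
      by (simp add: matrix_mul_rid vec_eq_iff matrix_matrix_mult_def mat_def ifz_mult mult_ifz sum_negf sum.delta' cong: if_cong)
    then have "Pt $ i $ j = - c * (Dh ** norm_laplacian E ** Dh) $ i $ j"
      by (simp add: Pt_def c_def PP)
    also have "(Dh ** norm_laplacian E ** Dh) $ i $ j
        = sqrt (degree E i) * norm_laplacian E $ i $ j * sqrt (degree E j)"
      unfolding Dh_def degree_sqrt_def by (simp add: diag_mul_left diag_mul_right)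
    also have "norm_laplacian E $ i $ j = (if i = j then 1 else 0)
        - (1 / sqrt (degree E i)) * (if E i j then 1 else 0) * (1 / sqrt (degree E j))"
      unfolding norm_laplacian_def degree_inv_sqrt_def
      by (simp add: diag_mul_left diag_mul_right adj_matrix_def mat_def)
    finally have X: "Pt $ i $ j = - c * (sqrt (degree E i) * ((if i = j then 1 else 0)
        - (1 / sqrt (degree E i)) * (if E i j then 1 else 0) * (1 / sqrt (degree E j)))
        * sqrt (degree E j))" .
    have si: "sqrt (degree E i) > 0" "sqrt (degree E j) > 0" using dpos by auto
    show ?thesis
    proof (cases "i = j")
      case True
      then have "Pt $ i $ j = - c * (sqrt (degree E i) * sqrt (degree E i))"
        using X sg(2)[of i] by simp
      then show ?thesis using True sg(2)[of i] dpos[of i] by simp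
    next
      case False
      then have "Pt $ i $ j = c * (if E i j then 1 else 0)"
        using X si by (simp add: field_simps)
      then show ?thesis using False by simp
    qed
  qed
  have Max_eq: "Max (range (\<lambda>k. Pt $ i $ k)) = c" for i
  proof (rule Max_eqI)
    show "finite (range (\<lambda>k. Pt $ i $ k))" by simp
    fix y assume "y \<in> range (\<lambda>k. Pt $ i $ k)"
    then obtain k where "y = Pt $ i $ k" by blast
    then show "y \<le> c" using Pt_eq[of i k] c dpos[of i]
      by (auto simp: mult_nonneg_nonneg) (smt (verit) mult_pos_pos)
  next
    obtain j where "E i j" using sg(3) by blast
    then show "c \<in> range (\<lambda>k. Pt $ i $ k)" using Pt_eq[of i j] by (metis rangeI)
  qed
  have "\<forall>i j. Pt $ i $ j = Max (range (\<lambda>k. Pt $ i $ k)) \<longleftrightarrow> adj_matrix E $ i $ j = 1"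
  proof (intro allI)
    fix i j
    have "- c * degree E i \<noteq> c" using c dpos[of i]
      by (metis mult_pos_pos neg_0_less_iff_less mult_minus_left less_irrefl less_trans)
    then show "Pt $ i $ j = Max (range (\<lambda>k. Pt $ i $ k)) \<longleftrightarrow> adj_matrix E $ i $ j = 1"
      using Pt_eq[of i j] Max_eq[of i] c by (auto simp: adj_matrix_def)
  qed
  then show ?thesis
    unfolding adjacency_identifying_def P_def[symmetric] Let_def
    by (intro exI[of _ "- mat 1"] exI[of _ "mat 1"]) (simp add: Pt_def)
qed

end
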